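(* Let $(A,\cdot,\circ)$ be a skew brace such that $A = B\circ C$ (i.e. every element of $A$ is of the form $b\circ c$ with $b\in B$, $c\in C$) for some sub-skew braces $B$ and $C$ satisfying all of the following: (1) $B$ and $C$ are trivial skew braces; (2) $B$ and $C$ are normal subgroups of $(A,\circ)$; (3) $B$ and $C$ are right ideals in $A$. Then $A^3 := A*A' = 1$, where $A' = A*A$; that is, $A$ is left nilpotent of index at most $3$.
   Context: A skew brace is a set $A$ with two group operations $\cdot$ (often written by juxtaposition) and $\circ$ such that $a\circ(bc) = (a\circ b)\,a^{-1}\,(a\circ c)$ for all $a,b,c\in A$. The two groups have the same identity $1$; $a^{-1}$ denotes the inverse of $a$ in $(A,\cdot)$ and $\overline{a}$ its inverse in $(A,\circ)$. Define $a*b = a^{-1}(a\circ b)b^{-1}$. For subsets $X,Y\subseteq A$, $X*Y$ denotes the subgroup of $(A,\cdot)$ generated by all $x*y$ with $x\in X$, $y\in Y$. A sub-skew brace is a subset that is a subgroup of both $(A,\cdot)$ and $(A,\circ)$. A skew brace (or sub-skew brace) $B$ is trivial if $a\circ b = ab$ for all $a,b\in B$. A subgroup $I$ of $(A,\cdot)$ is a left ideal in $A$ if $A*I\subseteq I$, and a right ideal in $A$ if $I*A\subseteq I$. *)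

theory Defs
  imports "HOL-Algebra.Algebra"
begin

text \<open>A skew brace is given by two group structures on the same carrier:
  G is the group (A, \<cdot>) and H is the group (A, \<circ>).\<close>

definition skew_brace :: "'a monoid \<Rightarrow> 'a monoid \<Rightarrow> bool" where
  "skew_brace G H \<longleftrightarrow> group G \<and> group H \<and> carrier G = carrier H \<and>
     (\<forall>a\<in>carrier G. \<forall>b\<in>carrier G. \<forall>c\<in>carrier G.
        a \<otimes>\<^bsub>H\<^esub> (b \<otimes>\<^bsub>G\<^esub> c)
          = (a \<otimes>\<^bsub>H\<^esub> b) \<otimes>\<^bsub>G\<^esub> inv\<^bsub>G\<^esub> a \<otimes>\<^bsub>G\<^esub> (a \<otimes>\<^bsub>H\<^esub> c))"

definition sb_star :: "'a monoid \<Rightarrow> 'a monoid \<Rightarrow> 'a \<Rightarrow> 'a \<Rightarrow> 'a" where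
  "sb_star G H a b = inv\<^bsub>G\<^esub> a \<otimes>\<^bsub>G\<^esub> (a \<otimes>\<^bsub>H\<^esub> b) \<otimes>\<^bsub>G\<^esub> inv\<^bsub>G\<^esub> b"

definition sb_star_set :: "'a monoid \<Rightarrow> 'a monoid \<Rightarrow> 'a set \<Rightarrow> 'a set \<Rightarrow> 'a set" where
  "sb_star_set G H S T = generate G {w. \<exists>s\<in>S. \<exists>t\<in>T. w = sb_star G H s t}"

definition sub_skew_brace :: "'a monoid \<Rightarrow> 'a monoid \<Rightarrow> 'a set \<Rightarrow> bool" where
  "sub_skew_brace G H B \<longleftrightarrow> subgroup B G \<and> subgroup B H"

definition trivial_on :: "'a monoid \<Rightarrow> 'a monoid \<Rightarrow> 'a set \<Rightarrow> bool" where
  "trivial_on G H B \<longleftrightarrow> (\<forall>a\<in>B. \<forall>b\<in>B. a \<otimes>\<^bsub>H\<^esub> b = a \<otimes>\<^bsub>G\<^esub> b)"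

definition right_ideal :: "'a monoid \<Rightarrow> 'a monoid \<Rightarrow> 'a set \<Rightarrow> bool" where
  "right_ideal G H I \<longleftrightarrow> subgroup I G \<and> sb_star_set G H I (carrier G) \<subseteq> I"

end

theory Submission
  imports Defs
begin

definition lam :: "'a monoid \<Rightarrow> 'a monoid \<Rightarrow> 'a \<Rightarrow> 'a \<Rightarrow> 'a" where
  "lam G H a x = inv\<^bsub>G\<^esub> a \<otimes>\<^bsub>G\<^esub> (a \<otimes>\<^bsub>H\<^esub> x)"

locale skb = G: group G + H: group H for G :: "'a monoid" and H :: "'a monoid" +
  assumes carr: "carrier H = carrier G"
  and ax: "\<And>a b c. a \<in> carrier G \<Longrightarrow> b \<in> carrier G \<Longrightarrow> c \<in> carrier G \<Longrightarrow>
        a \<otimes>\<^bsub>H\<^esub> (b \<otimes>\<^bsub>G\<^esub> c)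
          = (a \<otimes>\<^bsub>H\<^esub> b) \<otimes>\<^bsub>G\<^esub> inv\<^bsub>G\<^esub> a \<otimes>\<^bsub>G\<^esub> (a \<otimes>\<^bsub>H\<^esub> c)"
begin

lemma Hclosed: "a \<in> carrier G \<Longrightarrow> b \<in> carrier G \<Longrightarrow> a \<otimes>\<^bsub>H\<^esub> b \<in> carrier G"
  using H.m_closed carr by blast

lemma lam_closed: "a \<in> carrier G \<Longrightarrow> x \<in> carrier G \<Longrightarrow> lam G H a x \<in> carrier G"
  unfolding lam_def using Hclosed by simp

lemma circ_eq: "a \<in> carrier G \<Longrightarrow> x \<in> carrier G \<Longrightarrow> a \<otimes>\<^bsub>H\<^esub> x = a \<otimes>\<^bsub>G\<^esub> lam G H a x"
  unfolding lam_def using Hclosed by (simp add: G.m_assoc[symmetric])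

lemma lam_mult: "a \<in> carrier G \<Longrightarrow> x \<in> carrier G \<Longrightarrow> y \<in> carrier G \<Longrightarrow>
   lam G H a (x \<otimes>\<^bsub>G\<^esub> y) = lam G H a x \<otimes>\<^bsub>G\<^esub> lam G H a y"
  unfolding lam_def using Hclosed by (simp add: ax G.m_assoc)

lemma lam_one: "a \<in> carrier G \<Longrightarrow> lam G H a \<one>\<^bsub>G\<^esub> = \<one>\<^bsub>G\<^esub>"
proof -
  assume a: "a \<in> carrier G"
  have "lam G H a \<one>\<^bsub>G\<^esub> = lam G H a \<one>\<^bsub>G\<^esub> \<otimes>\<^bsub>G\<^esub> lam G H a \<one>\<^bsub>G\<^esub>"
    using lam_mult[OF a, of "\<one>\<^bsub>G\<^esub>" "\<one>\<^bsub>G\<^esub>"] by simp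
  hence "lam G H a \<one>\<^bsub>G\<^esub> \<otimes>\<^bsub>G\<^esub> lam G H a \<one>\<^bsub>G\<^esub> = lam G H a \<one>\<^bsub>G\<^esub> \<otimes>\<^bsub>G\<^esub> \<one>\<^bsub>G\<^esub>"
    using lam_closed[OF a G.one_closed] by simp
  thus ?thesis using lam_closed[OF a G.one_closed] G.l_cancel by blast
qed

lemma lam_inv: "a \<in> carrier G \<Longrightarrow> x \<in> carrier G \<Longrightarrow> lam G H a (inv\<^bsub>G\<^esub> x) = inv\<^bsub>G\<^esub> (lam G H a x)"
proof -
  assume a: "a \<in> carrier G" and x: "x \<in> carrier G"
  have "lam G H a (inv\<^bsub>G\<^esub> x) \<otimes>\<^bsub>G\<^esub> lam G H a x = \<one>\<^bsub>G\<^esub>"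
    using lam_mult[OF a G.inv_closed[OF x] x] lam_one[OF a] x by simp
  thus ?thesis using lam_closed a x G.inv_closed G.inv_equality by metis
qed

lemma lam_comp: "a \<in> carrier G \<Longrightarrow> b \<in> carrier G \<Longrightarrow> x \<in> carrier G \<Longrightarrow>
   lam G H (a \<otimes>\<^bsub>H\<^esub> b) x = lam G H a (lam G H b x)"
proof -
  assume a: "a \<in> carrier G" and b: "b \<in> carrier G" and x: "x \<in> carrier G"
  have ab: "a \<otimes>\<^bsub>H\<^esub> b \<in> carrier G" using Hclosed a b by simp
  have "(a \<otimes>\<^bsub>H\<^esub> b) \<otimes>\<^bsub>H\<^esub> x = a \<otimes>\<^bsub>H\<^esub> (b \<otimes>\<^bsub>H\<^esub> x)"
    using a b x carr H.m_assoc by simp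
  also have "\<dots> = a \<otimes>\<^bsub>H\<^esub> (b \<otimes>\<^bsub>G\<^esub> lam G H b x)" using circ_eq b x by simp
  also have "\<dots> = (a \<otimes>\<^bsub>H\<^esub> b) \<otimes>\<^bsub>G\<^esub> inv\<^bsub>G\<^esub> a \<otimes>\<^bsub>G\<^esub> (a \<otimes>\<^bsub>H\<^esub> lam G H b x)"
    using ax a b lam_closed x by simp
  finally have e: "(a \<otimes>\<^bsub>H\<^esub> b) \<otimes>\<^bsub>H\<^esub> x = (a \<otimes>\<^bsub>H\<^esub> b) \<otimes>\<^bsub>G\<^esub> (inv\<^bsub>G\<^esub> a \<otimes>\<^bsub>G\<^esub> (a \<otimes>\<^bsub>H\<^esub> lam G H b x))"
    using ab a Hclosed lam_closed b x by (simp add: G.m_assoc)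
  show ?thesis unfolding lam_def e
    using ab a Hclosed lam_closed b x by (simp add: G.m_assoc[symmetric])
qed

lemma star_eq: "a \<in> carrier G \<Longrightarrow> x \<in> carrier G \<Longrightarrow> sb_star G H a x = lam G H a x \<otimes>\<^bsub>G\<^esub> inv\<^bsub>G\<^esub> x"
  unfolding sb_star_def lam_def by simp

lemma star_closed: "a \<in> carrier G \<Longrightarrow> x \<in> carrier G \<Longrightarrow> sb_star G H a x \<in> carrier G"
  using star_eq lam_closed by simp

lemma star_in: "right_ideal G H Xs \<Longrightarrow> x \<in> Xs \<Longrightarrow> t \<in> carrier G \<Longrightarrow> sb_star G H x t \<in> Xs"
proof -
  assume r: "right_ideal G H Xs" and x: "x \<in> Xs" and t: "t \<in> carrier G"
  have "sb_star G H x t \<in> {w. \<exists>s\<in>Xs. \<exists>t\<in>carrier G. w = sb_star G H s t}" using x t by blast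
  hence "sb_star G H x t \<in> sb_star_set G H Xs (carrier G)" unfolding sb_star_set_def by (rule generate.incl)
  thus ?thesis using r unfolding right_ideal_def by blast
qed

end

lemma lam_triv:
  fixes G H :: "'a monoid"
  assumes "skb G H" "subgroup Xs G" "trivial_on G H Xs" "b \<in> Xs" "w \<in> Xs"
  shows "lam G H b w = w"
proof -
  interpret skb G H by fact
  have bc: "b \<in> carrier G" and wc: "w \<in> carrier G" using assms by (auto dest: subgroup.subset)
  show ?thesis using assms bc wc unfolding lam_def trivial_on_def
    by (simp add: G.m_assoc[symmetric])
qed

lemma decomp_G:
  fixes G H :: "'a monoid"
  assumes "skb G H" "right_ideal G H Xs" "subgroup Xs G" "x \<in> Xs" "y \<in> carrier G"
  shows "\<exists>x'\<in>Xs. x \<otimes>\<^bsub>H\<^esub> y = x' \<otimes>\<^bsub>G\<^esub> y"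
proof -
  interpret skb G H by fact
  have xc: "x \<in> carrier G" using subgroup.subset[OF assms(3)] assms(4) by blast
  have y: "y \<in> carrier G" by fact
  have si: "sb_star G H x y \<in> Xs" using star_in[OF assms(2,4,5)] .
  have sc: "sb_star G H x y \<in> carrier G" using star_closed[OF xc y] .
  have lc: "lam G H x y \<in> carrier G" using lam_closed[OF xc y] .
  have e1: "x \<otimes>\<^bsub>H\<^esub> y = x \<otimes>\<^bsub>G\<^esub> lam G H x y" using circ_eq[OF xc y] .
  have e2: "sb_star G H x y \<otimes>\<^bsub>G\<^esub> y = lam G H x y"
    unfolding star_eq[OF xc y] using lc y by (simp add: G.m_assoc)
  have "x \<otimes>\<^bsub>H\<^esub> y = (x \<otimes>\<^bsub>G\<^esub> sb_star G H x y) \<otimes>\<^bsub>G\<^esub> y"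
    unfolding e1 e2[symmetric] using xc sc y by (simp only: G.m_assoc)
  moreover have "x \<otimes>\<^bsub>G\<^esub> sb_star G H x y \<in> Xs"
    using subgroup.m_closed[OF assms(3) assms(4) si] .
  ultimately show ?thesis by blast
qed

lemma star_right:
  fixes G H :: "'a monoid"
  assumes "skb G H" "subgroup Ys G" "trivial_on G H Ys" "b \<in> Ys" "g \<in> carrier G" "\<beta> \<in> Ys"
  shows "sb_star G H b (g \<otimes>\<^bsub>G\<^esub> \<beta>) = sb_star G H b g"
proof -
  interpret skb G H by fact
  have bc: "b \<in> carrier G" and \<beta>c: "\<beta> \<in> carrier G"
    using subgroup.subset[OF assms(2)] assms(4,6) by blast+
  have g: "g \<in> carrier G" by fact
  have l: "lam G H b \<beta> = \<beta>" using lam_triv[OF assms(1,2,3,4,6)] .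
  have lg: "lam G H b g \<in> carrier G" using lam_closed[OF bc g] .
  have "sb_star G H b (g \<otimes>\<^bsub>G\<^esub> \<beta>) = (lam G H b g \<otimes>\<^bsub>G\<^esub> \<beta>) \<otimes>\<^bsub>G\<^esub> (inv\<^bsub>G\<^esub> \<beta> \<otimes>\<^bsub>G\<^esub> inv\<^bsub>G\<^esub> g)"
    using star_eq[OF bc G.m_closed[OF g \<beta>c]] lam_mult[OF bc g \<beta>c] l G.inv_mult_group[OF g \<beta>c] by simp
  also have "\<dots> = lam G H b g \<otimes>\<^bsub>G\<^esub> inv\<^bsub>G\<^esub> g"
  proof -
    have "\<beta> \<otimes>\<^bsub>G\<^esub> (inv\<^bsub>G\<^esub> \<beta> \<otimes>\<^bsub>G\<^esub> inv\<^bsub>G\<^esub> g) = inv\<^bsub>G\<^esub> g"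
      using \<beta>c g by (simp add: G.m_assoc[symmetric])
    thus ?thesis using lg \<beta>c g by (simp add: G.m_assoc)
  qed
  finally show ?thesis using star_eq[OF bc g] by simp
qed

lemma key:
  fixes G H :: "'a monoid"
  assumes sk: "skb G H" and P: "subgroup P G" and Q: "subgroup Q G"
    and nQ: "Q \<lhd> H" and tP: "trivial_on G H P" and tQ: "trivial_on G H Q"
    and dec: "\<forall>z\<in>carrier G. \<exists>g\<in>Q. \<exists>\<beta>\<in>P. z = g \<otimes>\<^bsub>G\<^esub> \<beta>"
    and p: "p \<in> P" and z: "z \<in> carrier G" and q1: "q1 \<in> Q"
  shows "lam G H q1 (sb_star G H p z) = sb_star G H p z"
proof -
  interpret skb G H by fact
  obtain g \<beta> where g: "g \<in> Q" and \<beta>: "\<beta> \<in> P" and zd: "z = g \<otimes>\<^bsub>G\<^esub> \<beta>" using dec z by blast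
  have pc: "p \<in> carrier G" using subgroup.subset[OF P] p by blast
  have gc: "g \<in> carrier G" using subgroup.subset[OF Q] g by blast
  have q1c: "q1 \<in> carrier G" using subgroup.subset[OF Q] q1 by blast
  have s1: "sb_star G H p z = sb_star G H p g" using star_right[OF sk P tP p gc \<beta>] zd by simp
  define q2 where "q2 = inv\<^bsub>H\<^esub> p \<otimes>\<^bsub>H\<^esub> q1 \<otimes>\<^bsub>H\<^esub> p"
  have q2Q: "q2 \<in> Q" unfolding q2_def using normal.inv_op_closed1[OF nQ] pc q1 carr by simp
  have q2c: "q2 \<in> carrier G" using subgroup.subset[OF Q] q2Q by blast
  have pq: "p \<otimes>\<^bsub>H\<^esub> q2 = q1 \<otimes>\<^bsub>H\<^esub> p"
  proof -
    have pH: "p \<in> carrier H" and qH: "q1 \<in> carrier H" using pc q1c carr by auto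
    show ?thesis unfolding q2_def using pH qH by (simp add: H.m_assoc[symmetric] H.r_inv)
  qed
  have lg1: "lam G H q1 g = g" using lam_triv[OF sk Q tQ q1 g] .
  have lg2: "lam G H q2 g = g" using lam_triv[OF sk Q tQ q2Q g] .
  have "lam G H q1 (lam G H p g) = lam G H (q1 \<otimes>\<^bsub>H\<^esub> p) g"
    using lam_comp[OF q1c pc gc] by simp
  also have "\<dots> = lam G H (p \<otimes>\<^bsub>H\<^esub> q2) g" using pq by simp
  also have "\<dots> = lam G H p g" using lam_comp[OF pc q2c gc] lg2 by simp
  finally have e: "lam G H q1 (lam G H p g) = lam G H p g" .
  have "lam G H q1 (sb_star G H p g) = lam G H q1 (lam G H p g) \<otimes>\<^bsub>G\<^esub> inv\<^bsub>G\<^esub> (lam G H q1 g)"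
    unfolding star_eq[OF pc gc] using lam_mult[OF q1c lam_closed[OF pc gc] G.inv_closed[OF gc]]
      lam_inv[OF q1c gc] by simp
  also have "\<dots> = sb_star G H p g" unfolding e lg1 star_eq[OF pc gc] ..
  finally show ?thesis unfolding s1 .
qed

theorem theorem1p3:
  fixes G H :: "'a monoid" and B C :: "'a set"
  assumes "skew_brace G H"
    and "sub_skew_brace G H B" and "sub_skew_brace G H C"
    and "carrier G = {b \<otimes>\<^bsub>H\<^esub> c | b c. b \<in> B \<and> c \<in> C}"
    and "trivial_on G H B" and "trivial_on G H C"
    and "B \<lhd> H" and "C \<lhd> H"
    and "right_ideal G H B" and "right_ideal G H C"
  shows "sb_star_set G H (carrier G) (sb_star_set G H (carrier G) (carrier G)) = {\<one>\<^bsub>G\<^esub>}"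
proof -
  have sk: "skb G H"
  proof -
    have g: "group G" "group H" and c: "carrier G = carrier H" using assms(1) unfolding skew_brace_def by blast+
    have "\<forall>a\<in>carrier G. \<forall>b\<in>carrier G. \<forall>c\<in>carrier G.
        a \<otimes>\<^bsub>H\<^esub> (b \<otimes>\<^bsub>G\<^esub> c)
          = (a \<otimes>\<^bsub>H\<^esub> b) \<otimes>\<^bsub>G\<^esub> inv\<^bsub>G\<^esub> a \<otimes>\<^bsub>G\<^esub> (a \<otimes>\<^bsub>H\<^esub> c)"
      using assms(1) unfolding skew_brace_def by blast
    thus ?thesis unfolding skb_def skb_axioms_def using g c by simp
  qed
  interpret skb G H by fact
  have BG: "subgroup B G" and BH: "subgroup B H" and CG: "subgroup C G" and CH: "subgroup C H"
    using assms(2,3) unfolding sub_skew_brace_def by blast+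
  have Bc: "\<And>x. x \<in> B \<Longrightarrow> x \<in> carrier G" using subgroup.subset[OF BG] by blast
  have Cc: "\<And>x. x \<in> C \<Longrightarrow> x \<in> carrier G" using subgroup.subset[OF CG] by blast
  have decBC: "\<forall>z\<in>carrier G. \<exists>g\<in>B. \<exists>\<beta>\<in>C. z = g \<otimes>\<^bsub>G\<^esub> \<beta>"
  proof
    fix z assume "z \<in> carrier G"
    then obtain b c where b: "b \<in> B" and c: "c \<in> C" and zd: "z = b \<otimes>\<^bsub>H\<^esub> c" using assms(4) by blast
    show "\<exists>g\<in>B. \<exists>\<beta>\<in>C. z = g \<otimes>\<^bsub>G\<^esub> \<beta>"
      using decomp_G[OF sk assms(9) BG b Cc[OF c]] zd c by blast
  qed
  have decCB: "\<forall>z\<in>carrier G. \<exists>g\<in>C. \<exists>\<beta>\<in>B. z = g \<otimes>\<^bsub>G\<^esub> \<beta>"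
  proof
    fix z assume "z \<in> carrier G"
    then obtain b c where b: "b \<in> B" and c: "c \<in> C" and zd: "z = b \<otimes>\<^bsub>H\<^esub> c" using assms(4) by blast
    define b' where "b' = inv\<^bsub>H\<^esub> c \<otimes>\<^bsub>H\<^esub> b \<otimes>\<^bsub>H\<^esub> c"
    have b'B: "b' \<in> B" unfolding b'_def using normal.inv_op_closed1[OF assms(7)] Cc[OF c] b carr by simp
    have cH: "c \<in> carrier H" and bH: "b \<in> carrier H" using Cc[OF c] Bc[OF b] carr by auto
    have "z = c \<otimes>\<^bsub>H\<^esub> b'" unfolding b'_def zd using cH bH
      by (simp add: H.m_assoc[symmetric] H.r_inv)
    thus "\<exists>g\<in>C. \<exists>\<beta>\<in>B. z = g \<otimes>\<^bsub>G\<^esub> \<beta>"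
      using decomp_G[OF sk assms(10) CG c Bc[OF b'B]] b'B by blast
  qed
  have K1: "\<And>p z q1. p \<in> B \<Longrightarrow> z \<in> carrier G \<Longrightarrow> q1 \<in> C \<Longrightarrow> lam G H q1 (sb_star G H p z) = sb_star G H p z"
    using key[OF sk BG CG assms(8) assms(5) assms(6) decCB] by blast
  have K2: "\<And>p z q1. p \<in> C \<Longrightarrow> z \<in> carrier G \<Longrightarrow> q1 \<in> B \<Longrightarrow> lam G H q1 (sb_star G H p z) = sb_star G H p z"
    using key[OF sk CG BG assms(7) assms(6) assms(5) decBC] by blast
  have main: "lam G H a (sb_star G H s t) = sb_star G H s t"
    if a: "a \<in> carrier G" and s: "s \<in> carrier G" and t: "t \<in> carrier G" for a s t
  proof -
    obtain b1 c1 where b1: "b1 \<in> B" and c1: "c1 \<in> C" and ad: "a = b1 \<otimes>\<^bsub>H\<^esub> c1" using assms(4) a by blast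
    obtain b c where b: "b \<in> B" and c: "c \<in> C" and sd: "s = b \<otimes>\<^bsub>H\<^esub> c" using assms(4) s by blast
    note bc = Bc[OF b] and cc = Cc[OF c] and b1c = Bc[OF b1] and c1c = Cc[OF c1]
    define u where "u = lam G H c t"
    have uc: "u \<in> carrier G" unfolding u_def using lam_closed[OF cc t] .
    have sc: "s \<in> carrier G" by fact
    have lbu: "lam G H b u \<in> carrier G" using lam_closed[OF bc uc] .
    have sdec: "sb_star G H s t = sb_star G H b u \<otimes>\<^bsub>G\<^esub> sb_star G H c t"
    proof -
      have aux: "inv\<^bsub>G\<^esub> u \<otimes>\<^bsub>G\<^esub> (u \<otimes>\<^bsub>G\<^esub> inv\<^bsub>G\<^esub> t) = inv\<^bsub>G\<^esub> t"
        using uc t by (simp add: G.m_assoc[symmetric])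
      have l: "lam G H s t = lam G H b u" unfolding sd u_def using lam_comp[OF bc cc t] .
      have "sb_star G H s t = lam G H b u \<otimes>\<^bsub>G\<^esub> inv\<^bsub>G\<^esub> t"
        using star_eq[OF sc t] l by simp
      also have "\<dots> = lam G H b u \<otimes>\<^bsub>G\<^esub> (inv\<^bsub>G\<^esub> u \<otimes>\<^bsub>G\<^esub> (u \<otimes>\<^bsub>G\<^esub> inv\<^bsub>G\<^esub> t))"
        unfolding aux ..
      also have "\<dots> = (lam G H b u \<otimes>\<^bsub>G\<^esub> inv\<^bsub>G\<^esub> u) \<otimes>\<^bsub>G\<^esub> (u \<otimes>\<^bsub>G\<^esub> inv\<^bsub>G\<^esub> t)"
        using lbu uc t by (simp add: G.m_assoc)
      also have "\<dots> = sb_star G H b u \<otimes>\<^bsub>G\<^esub> sb_star G H c t"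
        by (subst star_eq[OF bc uc], subst star_eq[OF cc t], simp only: u_def)
      finally show ?thesis .
    qed
    have w1: "sb_star G H b u \<in> carrier G" using star_closed[OF bc uc] .
    have w2: "sb_star G H c t \<in> carrier G" using star_closed[OF cc t] .
    have e1: "lam G H a (sb_star G H b u) = sb_star G H b u"
    proof -
      have "lam G H a (sb_star G H b u) = lam G H b1 (lam G H c1 (sb_star G H b u))"
        unfolding ad using lam_comp[OF b1c c1c w1] .
      also have "\<dots> = lam G H b1 (sb_star G H b u)" using K1[OF b uc c1] by simp
      also have "\<dots> = sb_star G H b u"
        using lam_triv[OF sk BG assms(5) b1 star_in[OF assms(9) b uc]] .
      finally show ?thesis .
    qed
    have e2: "lam G H a (sb_star G H c t) = sb_star G H c t"
    proof -
      have "lam G H a (sb_star G H c t) = lam G H b1 (lam G H c1 (sb_star G H c t))"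
        unfolding ad using lam_comp[OF b1c c1c w2] .
      also have "\<dots> = lam G H b1 (sb_star G H c t)"
        using lam_triv[OF sk CG assms(6) c1 star_in[OF assms(10) c t]] by simp
      also have "\<dots> = sb_star G H c t" using K2[OF c t b1] .
      finally show ?thesis .
    qed
    show ?thesis unfolding sdec lam_mult[OF a w1 w2] e1 e2 ..
  qed
  define S where "S = {w. \<exists>s\<in>carrier G. \<exists>t\<in>carrier G. w = sb_star G H s t}"
  have Sc: "\<And>h. h \<in> S \<Longrightarrow> h \<in> carrier G" unfolding S_def using star_closed by blast
  have Sf: "\<And>h a. h \<in> S \<Longrightarrow> a \<in> carrier G \<Longrightarrow> lam G H a h = h"
    unfolding S_def using main by blast
  have T: "x \<in> carrier G \<and> lam G H a x = x" if x: "x \<in> generate G S" and a: "a \<in> carrier G" for x a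
    using x
  proof (induction rule: generate.induct)
    case one
    then show ?case using lam_one[OF a] by simp
  next
    case (incl h)
    then show ?case using Sc Sf a by blast
  next
    case (inv h)
    then show ?case using Sc[OF inv] Sf[OF inv a] lam_inv[OF a Sc[OF inv]] by simp
  next
    case (eng h1 h2)
    then show ?case using lam_mult[OF a] by simp
  qed
  define S2 where "S2 = {w. \<exists>s\<in>carrier G. \<exists>t\<in>generate G S. w = sb_star G H s t}"
  have S2: "S2 \<subseteq> {\<one>\<^bsub>G\<^esub>}"
  proof
    fix w assume "w \<in> S2"
    then obtain s t where s: "s \<in> carrier G" and t: "t \<in> generate G S" and w: "w = sb_star G H s t"
      unfolding S2_def by blast
    have tc: "t \<in> carrier G" and l: "lam G H s t = t" using T[OF t s] by auto
    have "w = \<one>\<^bsub>G\<^esub>" unfolding w star_eq[OF s tc] l using G.r_inv[OF tc] .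
    thus "w \<in> {\<one>\<^bsub>G\<^esub>}" by simp
  qed
  have "generate G S2 \<subseteq> {\<one>\<^bsub>G\<^esub>}"
  proof
    fix x assume "x \<in> generate G S2"
    thus "x \<in> {\<one>\<^bsub>G\<^esub>}"
    proof (induction rule: generate.induct)
      case one then show ?case by simp
    next
      case (incl h) then show ?case using S2 by blast
    next
      case (inv h) then have "h = \<one>\<^bsub>G\<^esub>" using S2 by blast
      then show ?case by simp
    next
      case (eng h1 h2) then show ?case by simp
    qed
  qed
  moreover have "\<one>\<^bsub>G\<^esub> \<in> generate G S2" by (rule generate.one)
  ultimately have "generate G S2 = {\<one>\<^bsub>G\<^esub>}" by blast
  moreover have "sb_star_set G H (carrier G) (sb_star_set G H (carrier G) (carrier G)) = generate G S2"
    unfolding sb_star_set_def S2_def S_def ..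
  ultimately show ?thesis by simp
qed

end
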